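(* Let $E$ be a Fréchet space, $E^*$ its topological dual with the weak$^*$ topology, $J=[a,b]$ with $a<b$, and $f:J\to E^*$ continuous. Then $$\int_a^b f(t)(\mu'(t))\,dt=0$$ for every $\mu\in C^1(J,E)$ with $\mu(a)=\mu(b)=0$ if and only if $f$ is constant on $J$.
   Context: $C^1(J,E)$ denotes continuously differentiable curves $J\to E$ (one-sided derivatives at the endpoints). The integrals are ordinary Lebesgue integrals of continuous real functions; integrals of $E^*$-valued continuous functions are understood in the weak sense: $\int_a^b f\,dt$ is the element $l\in E^*$ with $l(e)=\int_a^b f(t)(e)\,dt$ for all $e\in E$. *)

theory Defs
  imports "HOL-Analysis.Analysis"
begin

text \<open>A Frechet space is modelled as a real vector space 'e together with a
countable family of seminorms p :: nat => 'e => real that separates points and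
for which the induced (metrizable, locally convex) topology is complete.\<close>

definition seminorm_on :: "('e::real_vector \<Rightarrow> real) \<Rightarrow> bool" where
  "seminorm_on q \<longleftrightarrow> (\<forall>x y. q (x + y) \<le> q x + q y) \<and> (\<forall>c x. q (c *\<^sub>R x) = \<bar>c\<bar> * q x)"

definition sn_cauchy :: "(nat \<Rightarrow> 'e::real_vector \<Rightarrow> real) \<Rightarrow> (nat \<Rightarrow> 'e) \<Rightarrow> bool" where
  "sn_cauchy p x \<longleftrightarrow> (\<forall>n. \<forall>\<epsilon>>0. \<exists>M. \<forall>i\<ge>M. \<forall>j\<ge>M. p n (x i - x j) < \<epsilon>)"

definition sn_tendsto :: "(nat \<Rightarrow> 'e::real_vector \<Rightarrow> real) \<Rightarrow> ('b \<Rightarrow> 'e) \<Rightarrow> 'e \<Rightarrow> 'b filter \<Rightarrow> bool" where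
  "sn_tendsto p g L F \<longleftrightarrow> (\<forall>n. ((\<lambda>s. p n (g s - L)) \<longlongrightarrow> 0) F)"

definition frechet_seminorms :: "(nat \<Rightarrow> 'e::real_vector \<Rightarrow> real) \<Rightarrow> bool" where
  "frechet_seminorms p \<longleftrightarrow>
     (\<forall>n. seminorm_on (p n)) \<and>
     (\<forall>x. (\<forall>n. p n x = 0) \<longrightarrow> x = 0) \<and>
     (\<forall>x. sn_cauchy p x \<longrightarrow> (\<exists>L. sn_tendsto p x L sequentially))"

text \<open>Topological dual: linear functionals continuous (at 0, hence everywhere)
for the seminorm topology, whose basic 0-neighbourhoods are finite intersections
of seminorm balls.\<close>

definition sn_dual :: "(nat \<Rightarrow> 'e::real_vector \<Rightarrow> real) \<Rightarrow> ('e \<Rightarrow> real) set" where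
  "sn_dual p = {l. linear l \<and>
     (\<forall>\<epsilon>>0. \<exists>N. \<exists>\<delta>>0. \<forall>x. (\<forall>n\<le>N. p n x < \<delta>) \<longrightarrow> \<bar>l x\<bar> < \<epsilon>)}"

definition sn_C1_on :: "(nat \<Rightarrow> 'e::real_vector \<Rightarrow> real) \<Rightarrow> real set \<Rightarrow> (real \<Rightarrow> 'e) \<Rightarrow> (real \<Rightarrow> 'e) \<Rightarrow> bool" where
  "sn_C1_on p J \<mu> \<mu>' \<longleftrightarrow>
     (\<forall>t\<in>J. sn_tendsto p (\<lambda>s. (1 / (s - t)) *\<^sub>R (\<mu> s - \<mu> t)) (\<mu>' t) (at t within J)) \<and>
     (\<forall>t\<in>J. sn_tendsto p \<mu>' (\<mu>' t) (at t within J))"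

definition weak_star_continuous_on :: "real set \<Rightarrow> (real \<Rightarrow> 'e \<Rightarrow> real) \<Rightarrow> bool" where
  "weak_star_continuous_on J f \<longleftrightarrow> (\<forall>e. continuous_on J (\<lambda>t. f t e))"

end

theory Submission
  imports Defs
begin

lemma dual_tendsto:
  assumes l: "l \<in> sn_dual p" and g: "sn_tendsto p g L F"
  shows "((\<lambda>s. l (g s)) \<longlongrightarrow> l L) F"
proof (rule tendstoI)
  fix \<epsilon> :: real assume "\<epsilon> > 0"
  from l have lin: "linear l" and c: "\<forall>\<epsilon>>0. \<exists>N. \<exists>\<delta>>0. \<forall>x. (\<forall>n\<le>N. p n x < \<delta>) \<longrightarrow> \<bar>l x\<bar> < \<epsilon>"
    by (auto simp: sn_dual_def)
  from c \<open>\<epsilon>>0\<close> obtain N \<delta> where d: "\<delta> > 0" and N: "\<And>x. (\<forall>n\<le>N. p n x < \<delta>) \<Longrightarrow> \<bar>l x\<bar> < \<epsilon>"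
    by blast
  have "\<forall>n\<in>{..N}. eventually (\<lambda>s. dist (p n (g s - L)) 0 < \<delta>) F"
    using g d by (auto simp: sn_tendsto_def tendsto_iff)
  then have "eventually (\<lambda>s. \<forall>n\<in>{..N}. dist (p n (g s - L)) 0 < \<delta>) F"
    by (simp add: eventually_ball_finite)
  then show "eventually (\<lambda>s. dist (l (g s)) (l L) < \<epsilon>) F"
  proof (rule eventually_mono)
    fix s assume "\<forall>n\<in>{..N}. dist (p n (g s - L)) 0 < \<delta>"
    have "\<forall>n\<le>N. p n (g s - L) < \<delta>"
    proof (intro allI impI)
      fix n assume "n \<le> N"
      then have "\<bar>p n (g s - L)\<bar> < \<delta>" using \<open>\<forall>n\<in>{..N}. dist (p n (g s - L)) 0 < \<delta>\<close>
        by (simp add: dist_real_def)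
      then show "p n (g s - L) < \<delta>" by linarith
    qed
    then have "\<bar>l (g s - L)\<bar> < \<epsilon>" by (rule N)
    then show "dist (l (g s)) (l L) < \<epsilon>"
      using lin by (simp add: dist_real_def linear_diff)
  qed
qed

lemma scale_tendsto:
  assumes "seminorm_on q" and "(h \<longlongrightarrow> 0) F"
  shows "((\<lambda>s. q (h s *\<^sub>R e)) \<longlongrightarrow> 0) F"
proof -
  have "((\<lambda>s. \<bar>h s\<bar> * q e) \<longlongrightarrow> 0) F"
    using assms(2) by (intro tendsto_mult_left_zero tendsto_rabs_zero)
  then show ?thesis using assms(1) by (simp add: seminorm_on_def)
qed

theorem lemma2:
  fixes p :: "nat \<Rightarrow> 'e::real_vector \<Rightarrow> real"
    and f :: "real \<Rightarrow> 'e \<Rightarrow> real"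
    and a b :: real
  assumes "frechet_seminorms p"
    and "a < b"
    and "\<forall>t\<in>{a..b}. f t \<in> sn_dual p"
    and "weak_star_continuous_on {a..b} f"
  shows "(\<forall>\<mu> \<mu>'. sn_C1_on p {a..b} \<mu> \<mu>' \<and> \<mu> a = 0 \<and> \<mu> b = 0 \<longrightarrow>
            integral {a..b} (\<lambda>t. f t (\<mu>' t)) = 0)
         \<longleftrightarrow> (\<forall>s\<in>{a..b}. \<forall>t\<in>{a..b}. f s = f t)"
proof
  assume H: "\<forall>\<mu> \<mu>'. sn_C1_on p {a..b} \<mu> \<mu>' \<and> \<mu> a = 0 \<and> \<mu> b = 0 \<longrightarrow>
            integral {a..b} (\<lambda>t. f t (\<mu>' t)) = 0"
  have sn: "\<And>n. seminorm_on (p n)" using assms(1) by (simp add: frechet_seminorms_def)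
  have lin: "\<And>t. t \<in> {a..b} \<Longrightarrow> linear (f t)" using assms(3) by (simp add: sn_dual_def)
  have key: "\<forall>s\<in>{a..b}. f s e = f a e" for e
  proof -
    define g where "g t = f t e" for t
    have gc: "continuous_on {a..b} g" using assms(4) by (simp add: weak_star_continuous_on_def g_def)
    define c where "c = integral {a..b} g / (b - a)"
    define \<phi> where "\<phi> u = integral {a..u} (\<lambda>s. g s - c)" for u
    have gcc: "continuous_on {a..b} (\<lambda>s. g s - c)" using gc by (intro continuous_intros)
    have gi: "g integrable_on {a..b}" using gc integrable_continuous_interval by blast
    have der: "(\<phi> has_field_derivative (g t - c)) (at t within {a..b})" if "t \<in> {a..b}" for t
      using integral_has_vector_derivative[OF gcc that] unfolding \<phi>_def
      by (simp add: has_real_derivative_iff_has_vector_derivative)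
    have \<phi>a: "\<phi> a = 0" by (simp add: \<phi>_def)
    have \<phi>b: "\<phi> b = 0"
    proof -
      have "\<phi> b = integral {a..b} g - integral {a..b} (\<lambda>s. c)"
        unfolding \<phi>_def by (rule integral_diff[OF gi]) (rule integrable_const_ivl)
      also have "\<dots> = 0" using assms(2) by (simp add: c_def)
      finally show ?thesis .
    qed
    have C1: "sn_C1_on p {a..b} (\<lambda>u. \<phi> u *\<^sub>R e) (\<lambda>u. (g u - c) *\<^sub>R e)"
      unfolding sn_C1_on_def sn_tendsto_def
    proof (intro conjI ballI allI)
      fix t n assume t: "t \<in> {a..b}"
      have "((\<lambda>s. (\<phi> s - \<phi> t) / (s - t)) \<longlongrightarrow> g t - c) (at t within {a..b})"
        using der[OF t] by (simp add: has_field_derivative_iff)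
      then have "((\<lambda>s. (\<phi> s - \<phi> t) / (s - t) - (g t - c)) \<longlongrightarrow> 0) (at t within {a..b})"
        by (simp add: LIM_zero)
      note T = this
      have eq: "(1 / (s - t)) *\<^sub>R (\<phi> s *\<^sub>R e - \<phi> t *\<^sub>R e) - (g t - c) *\<^sub>R e
          = ((\<phi> s - \<phi> t) / (s - t) - (g t - c)) *\<^sub>R e" for s
        by (simp only: scaleR_diff_left[symmetric] scaleR_scaleR) simp
      from scale_tendsto[OF sn T]
      show "((\<lambda>s. p n ((1 / (s - t)) *\<^sub>R (\<phi> s *\<^sub>R e - \<phi> t *\<^sub>R e) - (g t - c) *\<^sub>R e)) \<longlongrightarrow> 0)
             (at t within {a..b})"
        by (simp only: eq)
    next
      fix t n assume t: "t \<in> {a..b}"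
      have "((\<lambda>s. g s) \<longlongrightarrow> g t) (at t within {a..b})"
        using gc t by (simp add: continuous_on_def)
      then have "((\<lambda>s. g s - g t) \<longlongrightarrow> 0) (at t within {a..b})"
        by (simp add: LIM_zero)
      note T = this
      have eq: "(g s - c) *\<^sub>R e - (g t - c) *\<^sub>R e = (g s - g t) *\<^sub>R e" for s
        by (simp only: scaleR_diff_left[symmetric]) simp
      from scale_tendsto[OF sn T]
      show "((\<lambda>s. p n ((g s - c) *\<^sub>R e - (g t - c) *\<^sub>R e)) \<longlongrightarrow> 0) (at t within {a..b})"
        by (simp only: eq)
    qed
    have I0: "integral {a..b} (\<lambda>t. f t ((g t - c) *\<^sub>R e)) = 0"
    proof -
      have "sn_C1_on p {a..b} (\<lambda>u. \<phi> u *\<^sub>R e) (\<lambda>u. (g u - c) *\<^sub>R e) \<and>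
            (\<lambda>u. \<phi> u *\<^sub>R e) a = 0 \<and> (\<lambda>u. \<phi> u *\<^sub>R e) b = 0"
        using C1 \<phi>a \<phi>b by simp
      then show ?thesis using H by blast
    qed
    have "integral {a..b} (\<lambda>t. f t ((g t - c) *\<^sub>R e)) = integral {a..b} (\<lambda>t. (g t - c) * g t)"
      by (rule integral_cong) (simp add: lin linear_scale g_def)
    then have I1: "integral {a..b} (\<lambda>t. (g t - c) * g t) = 0" using I0 by simp
    have gci: "(\<lambda>s. g s - c) integrable_on {a..b}" using gcc integrable_continuous_interval by blast
    have I2: "integral {a..b} (\<lambda>t. (g t - c) * c) = 0"
      using integral_mult_left[of "{a..b}" "\<lambda>t. g t - c" c] \<phi>b by (simp add: \<phi>_def)
    have int1: "(\<lambda>t. (g t - c) * g t) integrable_on {a..b}"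
      by (rule integrable_continuous_interval) (use gc in \<open>intro continuous_intros\<close>)
    have int2: "(\<lambda>t. (g t - c) * c) integrable_on {a..b}"
      by (rule integrable_continuous_interval) (use gc in \<open>intro continuous_intros\<close>)
    have "integral {a..b} (\<lambda>t. (g t - c)^2) =
          integral {a..b} (\<lambda>t. (g t - c) * g t) - integral {a..b} (\<lambda>t. (g t - c) * c)"
    proof -
      have "(\<lambda>t. (g t - c)^2) = (\<lambda>t. (g t - c) * g t - (g t - c) * c)"
        by (rule ext) (simp add: power2_eq_square right_diff_distrib)
      then show ?thesis using integral_diff[OF int1 int2] by simp
    qed
    then have I3: "integral {a..b} (\<lambda>t. (g t - c)^2) = 0" using I1 I2 by linarith
    have sqc: "continuous_on {a..b} (\<lambda>t. (g t - c)^2)" using gc by (intro continuous_intros)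
    then have "((\<lambda>t. (g t - c)^2) has_integral 0) {a..b}"
      using integrable_integral[OF integrable_continuous_interval[OF sqc]] I3 by simp
    note HI = this
    have z: "(g x - c)^2 = 0" if x: "x \<in> {a..b}" for x
    proof (rule has_integral_0_cbox_imp_0[of a b "\<lambda>t. (g t - c)^2"])
      show "continuous_on (cbox a b) (\<lambda>t. (g t - c)^2)" using sqc by (simp only: cbox_interval)
      show "((\<lambda>t. (g t - c)^2) has_integral 0) (cbox a b)" using HI by (simp only: cbox_interval)
      show "x \<in> cbox a b" using x by (simp only: cbox_interval)
      show "0 \<le> (g y - c)^2" for y by (rule zero_le_power2)
      have "(a + b) / 2 \<in> box a b" using assms(2) by (simp add: box_real)
      then show "box a b \<noteq> {}" by blast
    qed
    show ?thesis
    proof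
      fix s assume "s \<in> {a..b}"
      then have "g s = c" "g a = c" using z[of s] z[of a] assms(2) by auto
      then show "f s e = f a e" by (simp add: g_def)
    qed
  qed
  show "\<forall>s\<in>{a..b}. \<forall>t\<in>{a..b}. f s = f t"
  proof (intro ballI ext)
    fix s t e assume "s \<in> {a..b}" "t \<in> {a..b}"
    then show "f s e = f t e" using key[of e] by (metis (no_types))
  qed
next
  assume K: "\<forall>s\<in>{a..b}. \<forall>t\<in>{a..b}. f s = f t"
  define l where "l = f a"
  have aJ: "a \<in> {a..b}" using assms(2) by simp
  have l: "l \<in> sn_dual p" using assms(3) aJ by (simp add: l_def)
  have ll: "linear l" using l by (simp add: sn_dual_def)
  show "\<forall>\<mu> \<mu>'. sn_C1_on p {a..b} \<mu> \<mu>' \<and> \<mu> a = 0 \<and> \<mu> b = 0 \<longrightarrow>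
            integral {a..b} (\<lambda>t. f t (\<mu>' t)) = 0"
  proof (intro allI impI)
    fix \<mu> \<mu>' assume A: "sn_C1_on p {a..b} \<mu> \<mu>' \<and> \<mu> a = 0 \<and> \<mu> b = 0"
    have D: "((\<lambda>s. l (\<mu> s)) has_vector_derivative l (\<mu>' t)) (at t within {a..b})"
      if t: "t \<in> {a..b}" for t
    proof -
      have "sn_tendsto p (\<lambda>s. (1 / (s - t)) *\<^sub>R (\<mu> s - \<mu> t)) (\<mu>' t) (at t within {a..b})"
        using A t by (simp add: sn_C1_on_def)
      from dual_tendsto[OF l this]
      have "((\<lambda>s. (l (\<mu> s) - l (\<mu> t)) / (s - t)) \<longlongrightarrow> l (\<mu>' t)) (at t within {a..b})"
        using ll by (simp add: linear_scale linear_diff divide_inverse mult.commute)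
      then show ?thesis
        by (simp add: has_field_derivative_iff has_real_derivative_iff_has_vector_derivative[symmetric])
    qed
    have "((\<lambda>t. l (\<mu>' t)) has_integral l (\<mu> b) - l (\<mu> a)) {a..b}"
      using fundamental_theorem_of_calculus[of a b "\<lambda>s. l (\<mu> s)" "\<lambda>t. l (\<mu>' t)"] D assms(2) by simp
    then have "((\<lambda>t. l (\<mu>' t)) has_integral 0) {a..b}"
      using A ll by (simp add: linear_0)
    note Il = this
    have "((\<lambda>t. f t (\<mu>' t)) has_integral 0) {a..b}"
    proof (rule has_integral_spike_finite[where S="{}", OF _ _ Il])
      fix x assume "x \<in> {a..b} - {}"
      then have "f x = f a" using K aJ by blast
      then show "f x (\<mu>' x) = l (\<mu>' x)" by (simp add: l_def)
    qed simp
    then show "integral {a..b} (\<lambda>t. f t (\<mu>' t)) = 0" by (rule integral_unique)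
  qed
qed

end
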